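(* For every $n\ge 0$, the coefficient $\ell_{n,1}$ equals the number of intervals of the Tamari lattice $\mathrm{Tam}_n$, i.e. the number of pairs $(A,B)$ of formulas of size $n$ with frontier $p_0,\dots,p_n$ such that $A\le B$ in the Tamari order. Equivalently, $L_1(z)=\sum_n\ell_{n,1}z^n$ is the ordinary generating function of the number of intervals of $\mathrm{Tam}_n$.
   Context: Formulas are built from atoms by a binary product: every formula is an atom or $A\bullet B$. A context is a finite (possibly empty) list of formulas; commas denote concatenation. Size: $|p|=0$ for atoms, $|A\bullet B|=1+|A|+|B|$. Frontier: $\mathrm{fr}(p)=p$, $\mathrm{fr}(A\bullet B)=\mathrm{fr}(A),\mathrm{fr}(B)$. The Tamari order $\le$ on formulas is the least preorder with $(A\bullet B)\bullet C\le A\bullet(B\bullet C)$ and $A_1\le A_2$, $B_1\le B_2$ implying $A_1\bullet B_1\le A_2\bullet B_2$; $\mathrm{Tam}_n$ is the poset of formulas of size $n$ over a fixed frontier $p_0,\dots,p_n$ of distinct atoms (equivalently, binary trees with $n$ internal nodes under right rotation). A context is irreducible if its leftmost formula is not a product. A focused derivation is a finite derivation tree with no undischarged premises using only: ($\bullet L$) from $A,B,\Delta\vdash C$ infer $A\bullet B,\Delta\vdash C$; ($\bullet R^{foc}$) from $\Gamma\vdash A$ and $\Delta\vdash B$ infer $\Gamma,\Delta\vdash A\bullet B$ with $\Gamma$ irreducible; ($id^{atm}$) $p\vdash p$ for atoms $p$. Let $\ell_{n,k}$ be the number of focused derivations of sequents $\Gamma\vdash B$ with $|B|=n$, $\mathrm{fr}(B)=p_0,\dots,p_n$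 and $\Gamma$ a context of length $k$; $L(z,x)=\sum_{n,k}\ell_{n,k}z^nx^k$ and $L_1(z)$ is the coefficient of $x^1$ in $L$. *)

theory Defs
  imports Main
begin

datatype frm = Atom nat | Prod frm frm

fun fsize :: "frm \<Rightarrow> nat" where
  "fsize (Atom p) = 0"
| "fsize (Prod A B) = 1 + fsize A + fsize B"

fun frontier :: "frm \<Rightarrow> frm list" where
  "frontier (Atom p) = [Atom p]"
| "frontier (Prod A B) = frontier A @ frontier B"

definition std_frontier :: "nat \<Rightarrow> frm list" where
  "std_frontier n = map Atom [0..<Suc n]"

inductive tamari :: "frm \<Rightarrow> frm \<Rightarrow> bool" where
  tam_refl: "tamari A A"
| tam_trans: "tamari A B \<Longrightarrow> tamari B C \<Longrightarrow> tamari A C"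
| tam_assoc: "tamari (Prod (Prod A B) C) (Prod A (Prod B C))"
| tam_cong: "tamari A1 A2 \<Longrightarrow> tamari B1 B2 \<Longrightarrow> tamari (Prod A1 B1) (Prod A2 B2)"

definition is_prod :: "frm \<Rightarrow> bool" where
  "is_prod A = (\<exists>B C. A = Prod B C)"

definition irreducible :: "frm list \<Rightarrow> bool" where
  "irreducible \<Gamma> = (case \<Gamma> of [] \<Rightarrow> True | A # _ \<Rightarrow> \<not> is_prod A)"

text \<open>Each node records the data determining its conclusion:
  \<open>DId p\<close> : p \<turnstile> p;
  \<open>DL A B \<Delta> C d\<close> : A\<bullet>B,\<Delta> \<turnstile> C from d proving A,B,\<Delta> \<turnstile> C;
  \<open>DR \<Gamma> \<Delta> A B d1 d2\<close> : \<Gamma>,\<Delta> \<turnstile> A\<bullet>B from d1 : \<Gamma> \<turnstile> A and d2 : \<Delta> \<turnstile> B.\<close>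
datatype deriv =
    DId nat
  | DL frm frm "frm list" frm deriv
  | DR "frm list" "frm list" frm frm deriv deriv

fun concl :: "deriv \<Rightarrow> frm list \<times> frm" where
  "concl (DId p) = ([Atom p], Atom p)"
| "concl (DL A B \<Delta> C d) = (Prod A B # \<Delta>, C)"
| "concl (DR \<Gamma> \<Delta> A B d1 d2) = (\<Gamma> @ \<Delta>, Prod A B)"

fun focused :: "deriv \<Rightarrow> bool" where
  "focused (DId p) = True"
| "focused (DL A B \<Delta> C d) = (focused d \<and> concl d = (A # B # \<Delta>, C))"
| "focused (DR \<Gamma> \<Delta> A B d1 d2) =
     (focused d1 \<and> focused d2 \<and> concl d1 = (\<Gamma>, A) \<and> concl d2 = (\<Delta>, B) \<and> irreducible \<Gamma>)"

definition ell :: "nat \<Rightarrow> nat \<Rightarrow> nat" where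
  "ell n k = card {d. focused d \<and> length (fst (concl d)) = k \<and>
                      fsize (snd (concl d)) = n \<and> frontier (snd (concl d)) = std_frontier n}"

definition tamari_intervals :: "nat \<Rightarrow> nat" where
  "tamari_intervals n = card {(A, B). fsize A = n \<and> frontier A = std_frontier n \<and>
                                     fsize B = n \<and> frontier B = std_frontier n \<and> tamari A B}"

end

theory Submission
  imports Defs
begin

inductive Dv :: "frm list \<Rightarrow> frm \<Rightarrow> bool" where
  did: "Dv [Atom p] (Atom p)"
| dl: "Dv (A # B # \<Delta>) C \<Longrightarrow> Dv (Prod A B # \<Delta>) C"
| dr: "Dv \<Gamma> A \<Longrightarrow> Dv \<Delta> B \<Longrightarrow> irreducible \<Gamma> \<Longrightarrow> Dv (\<Gamma> @ \<Delta>) (Prod A B)"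

lemma Dv_nonempty: "Dv \<Gamma> C \<Longrightarrow> \<Gamma> \<noteq> []"
  by (induction rule: Dv.induct) auto

lemma Dv_frontier: "Dv \<Gamma> C \<Longrightarrow> concat (map frontier \<Gamma>) = frontier C"
  by (induction rule: Dv.induct) auto

lemma frontier_ne: "frontier X \<noteq> []"
  by (induction X) auto

lemma length_frontier: "length (frontier X) = Suc (fsize X)"
  by (induction X) auto

lemma irr_app: "\<Gamma> \<noteq> [] \<Longrightarrow> irreducible (\<Gamma> @ \<Delta>) = irreducible \<Gamma>"
  by (cases \<Gamma>) (auto simp: irreducible_def)

lemma genR: "Dv \<Gamma> A \<Longrightarrow> Dv \<Delta> B \<Longrightarrow> Dv (\<Gamma> @ \<Delta>) (Prod A B)"
proof (induction arbitrary: \<Delta> B rule: Dv.induct)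
  case (did p)
  then show ?case using dr[OF Dv.did[of p], of \<Delta> B] by (simp add: irreducible_def is_prod_def)
next
  case (dl A B \<Delta>' C)
  then show ?case using Dv.dl by fastforce
next
  case (dr \<Gamma> A \<Delta>' B')
  have "\<Gamma> \<noteq> []" using dr(1) Dv_nonempty by blast
  then have "irreducible (\<Gamma> @ \<Delta>')" using dr irr_app by blast
  moreover have "Dv (\<Gamma> @ \<Delta>') (Prod A B')" using Dv.dr dr by blast
  ultimately show ?case using Dv.dr[OF _ dr.prems] by fastforce
qed

lemma Dv_id: "Dv [A] A"
proof (induction A)
  case (Atom x)
  then show ?case by (rule did)
next
  case (Prod A1 A2)
  then show ?case using genR[OF Prod.IH(1) genR[OF Prod.IH(2) Prod.IH(2)]] Dv.dl
    by (metis append_Cons append_Nil genR)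
qed

lemma cut_gen:
  "\<And>\<Gamma> \<Delta>1 \<Theta> C. Dv \<Gamma> B \<Longrightarrow> Dv (\<Delta>1 @ B # \<Theta>) C \<Longrightarrow> Dv (\<Delta>1 @ \<Gamma> @ \<Theta>) C"
proof (induction B)
  case (Atom p)
  have "Dv \<Sigma> C \<Longrightarrow> \<Sigma> = \<Delta>1 @ Atom p # \<Theta> \<Longrightarrow> Dv (\<Delta>1 @ \<Gamma> @ \<Theta>) C" for \<Sigma> C \<Delta>1 \<Theta>
  proof (induction \<Sigma> C arbitrary: \<Delta>1 \<Theta> rule: Dv.induct)
    case (did q)
    then show ?case using Atom.prems(1) by (cases \<Delta>1) auto
  next
    case (dl A B \<Delta> C)
    show ?case
    proof (cases \<Delta>1)
      case Nil
      then show ?thesis using dl.prems by simp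
    next
      case (Cons a list)
      then show ?thesis using dl.prems dl.IH[of "A # B # list" \<Theta>] Dv.dl by auto
    qed
  next
    case (dr \<Sigma>1 C1 \<Sigma>2 C2)
    from dr.prems have "\<Sigma>1 @ \<Sigma>2 = \<Delta>1 @ Atom p # \<Theta>" .
    then obtain us where "(\<Sigma>1 = \<Delta>1 @ us \<and> us @ \<Sigma>2 = Atom p # \<Theta>) \<or> (\<Sigma>1 @ us = \<Delta>1 \<and> \<Sigma>2 = us @ Atom p # \<Theta>)"
      by (auto simp: append_eq_append_conv2)
    then show ?case
    proof
      assume h: "\<Sigma>1 = \<Delta>1 @ us \<and> us @ \<Sigma>2 = Atom p # \<Theta>"
      show ?thesis
      proof (cases us)
        case Nil
        then have "\<Sigma>2 = [] @ Atom p # \<Theta>" using h by simp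
        then have "Dv ([] @ \<Gamma> @ \<Theta>) C2" using dr.IH(2) by blast
        then show ?thesis using genR[OF dr.hyps(1)] h Nil by simp
      next
        case (Cons u us')
        then have "\<Sigma>1 = \<Delta>1 @ Atom p # us'" "\<Theta> = us' @ \<Sigma>2" using h by auto
        then show ?thesis using dr.IH(1) genR[of _ C1 \<Sigma>2 C2] dr.hyps(2) by fastforce
      qed
    next
      assume h: "\<Sigma>1 @ us = \<Delta>1 \<and> \<Sigma>2 = us @ Atom p # \<Theta>"
      then show ?thesis using dr.IH(2) genR[OF dr.hyps(1)] by fastforce
    qed
  qed
  then show ?case using Atom.prems(2) by blast
next
  case (Prod X Y)
  have sub: "\<And>\<Gamma>'. Dv \<Gamma>' (Prod X Y) \<Longrightarrow> Dv (X # Y # \<Theta>') C' \<Longrightarrow> Dv (\<Gamma>' @ \<Theta>') C'" for \<Theta>' C'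
  proof -
    fix \<Gamma>'
    show "Dv \<Gamma>' (Prod X Y) \<Longrightarrow> Dv (X # Y # \<Theta>') C' \<Longrightarrow> Dv (\<Gamma>' @ \<Theta>') C'"
    proof (induction \<Gamma>' "Prod X Y" rule: Dv.induct)
      case (dl A B \<Delta>)
      then show ?case using Dv.dl by fastforce
    next
      case (dr \<Gamma>1 \<Gamma>2)
      have "Dv ([] @ \<Gamma>1 @ Y # \<Theta>') C'" using Prod.IH(1)[OF dr.hyps(1), of "[]"] dr.prems by simp
      then have "Dv (\<Gamma>1 @ \<Gamma>2 @ \<Theta>') C'" using Prod.IH(2)[OF dr.hyps(3), of \<Gamma>1] by simp
      then show ?case by simp
    qed
  qed
  have "Dv \<Sigma> C \<Longrightarrow> \<Sigma> = \<Delta>1 @ Prod X Y # \<Theta> \<Longrightarrow> Dv (\<Delta>1 @ \<Gamma> @ \<Theta>) C" for \<Sigma> C \<Delta>1 \<Theta>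
  proof (induction \<Sigma> C arbitrary: \<Delta>1 \<Theta> rule: Dv.induct)
    case (did q)
    then show ?case by (cases \<Delta>1) auto
  next
    case (dl A B \<Delta> C)
    show ?case
    proof (cases \<Delta>1)
      case Nil
      then show ?thesis using dl sub Prod.prems(1) by auto
    next
      case (Cons a list)
      then show ?thesis using dl.prems dl.IH[of "A # B # list" \<Theta>] Dv.dl by auto
    qed
  next
    case (dr \<Sigma>1 C1 \<Sigma>2 C2)
    from dr.prems have "\<Sigma>1 @ \<Sigma>2 = \<Delta>1 @ Prod X Y # \<Theta>" .
    then obtain us where "(\<Sigma>1 = \<Delta>1 @ us \<and> us @ \<Sigma>2 = Prod X Y # \<Theta>) \<or> (\<Sigma>1 @ us = \<Delta>1 \<and> \<Sigma>2 = us @ Prod X Y # \<Theta>)"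
      by (auto simp: append_eq_append_conv2)
    then show ?case
    proof
      assume h: "\<Sigma>1 = \<Delta>1 @ us \<and> us @ \<Sigma>2 = Prod X Y # \<Theta>"
      show ?thesis
      proof (cases us)
        case Nil
        then have "\<Sigma>2 = [] @ Prod X Y # \<Theta>" using h by simp
        then have "Dv ([] @ \<Gamma> @ \<Theta>) C2" using dr.IH(2) by blast
        then show ?thesis using genR[OF dr.hyps(1)] h Nil by simp
      next
        case (Cons u us')
        then have "\<Sigma>1 = \<Delta>1 @ Prod X Y # us'" "\<Theta> = us' @ \<Sigma>2" using h by auto
        then show ?thesis using dr.IH(1) genR[of _ C1 \<Sigma>2 C2] dr.hyps(2) by fastforce
      qed
    next
      assume h: "\<Sigma>1 @ us = \<Delta>1 \<and> \<Sigma>2 = us @ Prod X Y # \<Theta>"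
      then show ?thesis using dr.IH(2) genR[OF dr.hyps(1)] by fastforce
    qed
  qed
  then show ?case using Prod.prems(2) by blast
qed

lemma complete: "tamari A B \<Longrightarrow> Dv [A] B"
proof (induction rule: tamari.induct)
  case (tam_refl A)
  then show ?case by (rule Dv_id)
next
  case (tam_trans A B C)
  then show ?case using cut_gen[of "[A]" B "[]" "[]" C] by simp
next
  case (tam_assoc A B C)
  have "Dv ([A] @ [B] @ [C]) (Prod A (Prod B C))"
    using genR[OF Dv_id genR[OF Dv_id Dv_id]] by blast
  then show ?case by (auto intro!: Dv.dl)
next
  case (tam_cong A1 A2 B1 B2)
  then show ?case using genR[of "[A1]" A2 "[B1]" B2] Dv.dl by simp
qed

fun lfold :: "frm list \<Rightarrow> frm" where
  "lfold [] = Atom 0"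
| "lfold (x # xs) = foldl Prod x xs"

lemma foldl_assoc: "tamari (foldl Prod a (d # ds)) (Prod a (foldl Prod d ds))"
proof (induction ds rule: rev_induct)
  case Nil
  then show ?case by (simp add: tam_refl)
next
  case (snoc e ds)
  have "tamari (foldl Prod a (d # ds @ [e])) (Prod (Prod a (foldl Prod d ds)) e)"
    using snoc tam_cong tam_refl by simp
  then show ?case using tam_trans[OF _ tam_assoc] by simp
qed

lemma lfold_app: "\<Gamma> \<noteq> [] \<Longrightarrow> \<Delta> \<noteq> [] \<Longrightarrow> tamari (lfold (\<Gamma> @ \<Delta>)) (Prod (lfold \<Gamma>) (lfold \<Delta>))"
proof -
  assume "\<Gamma> \<noteq> []" "\<Delta> \<noteq> []"
  then obtain a as d ds where "\<Gamma> = a # as" "\<Delta> = d # ds" by (meson neq_Nil_conv)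
  moreover have "foldl Prod a (as @ d # ds) = foldl Prod (foldl Prod a as) (d # ds)" by simp
  ultimately show ?thesis using foldl_assoc[of "foldl Prod a as" d ds] by (simp del: foldl_Cons)
qed

lemma sound: "Dv \<Gamma> C \<Longrightarrow> tamari (lfold \<Gamma>) C"
proof (induction rule: Dv.induct)
  case (did p)
  then show ?case by (simp add: tam_refl)
next
  case (dl A B \<Delta> C)
  then show ?case by simp
next
  case (dr \<Gamma> A \<Delta> B)
  have "tamari (lfold (\<Gamma> @ \<Delta>)) (Prod (lfold \<Gamma>) (lfold \<Delta>))"
    using lfold_app Dv_nonempty dr.hyps by blast
  moreover have "tamari (Prod (lfold \<Gamma>) (lfold \<Delta>)) (Prod A B)" using dr.IH by (rule tam_cong)
  ultimately show ?case by (rule tam_trans)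
qed

lemma focused_Dv: "focused d \<Longrightarrow> Dv (fst (concl d)) (snd (concl d))"
  by (induction d) (auto intro: Dv.intros)

lemma Dv_focused: "Dv \<Gamma> C \<Longrightarrow> \<exists>d. focused d \<and> concl d = (\<Gamma>, C)"
proof (induction rule: Dv.induct)
  case (did p)
  then show ?case by (intro exI[of _ "DId p"]) simp
next
  case (dl A B \<Delta> C)
  then obtain d where "focused d" "concl d = (A # B # \<Delta>, C)" by blast
  then show ?case by (intro exI[of _ "DL A B \<Delta> C d"]) simp
next
  case (dr \<Gamma> A \<Delta> B)
  then obtain d1 d2 where "focused d1" "concl d1 = (\<Gamma>, A)" "focused d2" "concl d2 = (\<Delta>, B)" by blast
  then show ?case using dr by (intro exI[of _ "DR \<Gamma> \<Delta> A B d1 d2"]) simp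
qed

lemma split_unique:
  assumes "\<Gamma> @ \<Delta> = \<Gamma>' @ \<Delta>'" "concat (map frontier \<Gamma>) = concat (map frontier \<Gamma>')"
  shows "\<Gamma> = \<Gamma>'"
proof -
  obtain us where "(\<Gamma> = \<Gamma>' @ us \<and> us @ \<Delta> = \<Delta>') \<or> (\<Gamma> @ us = \<Gamma>' \<and> \<Delta> = us @ \<Delta>')"
    using assms(1) by (auto simp: append_eq_append_conv2)
  then have "\<Gamma> = \<Gamma>' @ us \<or> \<Gamma> @ us = \<Gamma>'" by blast
  moreover have "concat (map frontier us) = [] \<Longrightarrow> us = []"
    using frontier_ne by (cases us) auto
  ultimately show ?thesis using assms(2) by auto
qed

lemma focused_unique: "focused d1 \<Longrightarrow> focused d2 \<Longrightarrow> concl d1 = concl d2 \<Longrightarrow> d1 = d2"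
proof (induction d1 arbitrary: d2)
  case (DId p)
  then show ?case by (cases d2) auto
next
  case (DL A B \<Delta> C d)
  show ?case
  proof (cases d2)
    case (DId q)
    then show ?thesis using DL.prems(3) by simp
  next
    case (DL A' B' \<Delta>' C' d')
    have "focused d" "focused d'" using DL.prems(1,2) \<open>d2 = _\<close> by auto
    moreover have "concl d = concl d'" using DL.prems \<open>d2 = _\<close> by auto
    ultimately have "d = d'" using DL.IH by blast
    then show ?thesis using DL.prems(3) \<open>d2 = _\<close> by simp
  next
    case (DR \<Gamma>' \<Delta>' A' B' e1 e2)
    then have "Dv \<Gamma>' A'" using DL.prems(2) focused_Dv by (metis focused.simps(3) fst_conv snd_conv)
    then have "\<Gamma>' \<noteq> []" using Dv_nonempty by blast
    then show ?thesis using DL.prems DR by (cases \<Gamma>') (auto simp: irreducible_def is_prod_def)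
  qed
next
  case (DR \<Gamma> \<Delta> A B e1 e2)
  show ?case
  proof (cases d2)
    case (DId q)
    then show ?thesis using DR.prems(3) by simp
  next
    case (DL A' B' \<Delta>' C' d')
    have "Dv \<Gamma> A" using DR.prems(1) focused_Dv by (metis focused.simps(3) fst_conv snd_conv)
    then have "\<Gamma> \<noteq> []" using Dv_nonempty by blast
    then show ?thesis using DR.prems DL by (cases \<Gamma>) (auto simp: irreducible_def is_prod_def)
  next
    fix \<Gamma>' \<Delta>' A' B' e1' e2'
    assume DR': "d2 = DR \<Gamma>' \<Delta>' A' B' e1' e2'"
    have p1: "focused e1" "concl e1 = (\<Gamma>, A)" "focused e2" "concl e2 = (\<Delta>, B)"
      using DR.prems(1) by auto
    have p2: "focused e1'" "concl e1' = (\<Gamma>', A')" "focused e2'" "concl e2' = (\<Delta>', B')"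
      using DR.prems(2) DR' by auto
    have f1: "concat (map frontier \<Gamma>) = frontier A"
      using Dv_frontier focused_Dv[OF p1(1)] p1(2) by simp
    have f2: "concat (map frontier \<Gamma>') = frontier A'"
      using Dv_frontier focused_Dv[OF p2(1)] p2(2) by simp
    have eq: "\<Gamma> @ \<Delta> = \<Gamma>' @ \<Delta>'" "A = A'" "B = B'" using DR.prems(3) DR' by auto
    then have g: "\<Gamma> = \<Gamma>'" using split_unique f1 f2 by metis
    then have dd: "\<Delta> = \<Delta>'" using eq by simp
    have "e1 = e1'" using DR.IH(1)[OF p1(1) p2(1)] p1(2) p2(2) eq(2) g by simp
    moreover have "e2 = e2'" using DR.IH(2)[OF p1(3) p2(3)] p1(4) p2(4) eq(3) dd by simp
    ultimately show ?thesis using DR' eq(2,3) g dd by simp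
  qed
qed

theorem proposition3p1:
  fixes n :: nat
  shows "ell n 1 = tamari_intervals n"
proof -
  let ?S = "{d. focused d \<and> length (fst (concl d)) = 1 \<and>
                      fsize (snd (concl d)) = n \<and> frontier (snd (concl d)) = std_frontier n}"
  let ?T = "{(A, B). fsize A = n \<and> frontier A = std_frontier n \<and>
                                     fsize B = n \<and> frontier B = std_frontier n \<and> tamari A B}"
  have inj1: "inj_on concl ?S"
  proof (rule inj_onI)
    fix x y assume "x \<in> ?S" "y \<in> ?S" "concl x = concl y"
    then show "x = y" using focused_unique[of x y] by blast
  qed
  have inj2: "inj_on (\<lambda>(A, B). ([A], B)) ?T" by (auto intro!: inj_onI)
  have img: "concl ` ?S = (\<lambda>(A, B). ([A], B)) ` ?T"
  proof (intro equalityI subsetI)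
    fix x assume "x \<in> concl ` ?S"
    then obtain d where d: "d \<in> ?S" "x = concl d" by (rule imageE)
    obtain \<Gamma> C where x: "x = (\<Gamma>, C)" by fastforce
    have cd: "concl d = (\<Gamma>, C)" using d x by simp
    have fd: "focused d" using d(1) by blast
    have "Dv \<Gamma> C" using focused_Dv[OF fd] cd by simp
    moreover have "length \<Gamma> = 1" using d(1) cd by simp
    moreover obtain A where "\<Gamma> = [A]" using calculation(2) by (cases \<Gamma>) auto
    ultimately have "Dv [A] C" by simp
    then have "tamari A C" "frontier A = frontier C" using sound[of "[A]" C] Dv_frontier[of "[A]" C] by simp_all
    moreover have "fsize A = fsize C" using \<open>frontier A = frontier C\<close> length_frontier[of A] length_frontier[of C]
      by simp
    moreover have "concl d = ([A], C)" using d x \<open>\<Gamma> = [A]\<close> by simp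
    moreover have "fsize C = n" "frontier C = std_frontier n" using d(1) \<open>concl d = ([A], C)\<close> by auto
    ultimately have "(A, C) \<in> ?T" by simp
    moreover have "x = (\<lambda>(A, B). ([A], B)) (A, C)" using x \<open>\<Gamma> = [A]\<close> by simp
    ultimately show "x \<in> (\<lambda>(A, B). ([A], B)) ` ?T" by (rule rev_image_eqI)
  next
    fix x assume "x \<in> (\<lambda>(A, B). ([A], B)) ` ?T"
    then obtain p where p: "p \<in> ?T" "x = (\<lambda>(A, B). ([A], B)) p" by (rule imageE)
    obtain A B where pab: "p = (A, B)" by (cases p)
    have ab: "(A, B) \<in> ?T" "x = ([A], B)" using p pab by simp_all
    have "tamari A B" using ab(1) by simp
    then have "Dv [A] B" by (rule complete)
    then obtain d where "focused d" "concl d = ([A], B)" using Dv_focused by blast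
    moreover have "d \<in> ?S" using ab \<open>focused d\<close> \<open>concl d = ([A], B)\<close> by simp
    moreover have "x = concl d" using ab(2) \<open>concl d = ([A], B)\<close> by simp
    ultimately show "x \<in> concl ` ?S" by (intro rev_image_eqI)
  qed
  have "ell n 1 = card ?S" by (simp add: ell_def)
  also have "\<dots> = card (concl ` ?S)" using card_image[OF inj1] by simp
  also have "\<dots> = card ?T" using img card_image[OF inj2] by simp
  also have "\<dots> = tamari_intervals n" by (simp add: tamari_intervals_def)
  finally show ?thesis .
qed

end
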